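(* Let $K$ be a simplicial complex and $K'\subset K$ a subcomplex. Then $K'$ is nice if and only if every simplex $\Delta\in K$ that equals the convex hull of $\Delta\cap K'$ belongs to $K'$.
   Context: A simplicial complex is a locally finite set of linear simplices in $\mathbb{R}^N$ closed under faces with pairwise intersections common faces. For $\Delta\in K$, $\Delta\cap K'$ denotes the subcomplex of $K'$ consisting of the simplices of $K'$ that are faces of $\Delta$ (the maximal subcomplex of $K'$ contained in $\Delta$). Two simplices are adjacent if they share a face; $\operatorname{star}(K')$ is the set of simplices of $K$ adjacent to some simplex of $K'$, together with their faces. $K'$ is nice if for every $\Delta\in\operatorname{star}(K')$, the subcomplex $\Delta\cap K'$ is a (single) face of $\Delta$ together with its faces. *)

theory Defs
  imports "HOL-Analysis.Analysis"
begin

definition is_simplex :: "'a::euclidean_space set \<Rightarrow> bool" where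
  "is_simplex S \<longleftrightarrow> (\<exists>V. finite V \<and> V \<noteq> {} \<and> \<not> affine_dependent V \<and> S = convex hull V)"

definition simplicial_complex :: "'a::euclidean_space set set \<Rightarrow> bool" where
  "simplicial_complex K \<longleftrightarrow>
     (\<forall>S\<in>K. is_simplex S) \<and>
     (\<forall>S\<in>K. \<forall>F. F face_of S \<and> F \<noteq> {} \<longrightarrow> F \<in> K) \<and>
     (\<forall>S\<in>K. \<forall>T\<in>K. S \<inter> T face_of S \<and> S \<inter> T face_of T) \<and>
     (\<forall>x. \<exists>U. open U \<and> x \<in> U \<and> finite {S\<in>K. S \<inter> U \<noteq> {}})"

definition subcomplex :: "'a::euclidean_space set set \<Rightarrow> 'a set set \<Rightarrow> bool" where
  "subcomplex K' K \<longleftrightarrow> K' \<subseteq> K \<and> simplicial_complex K'"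

text \<open>Delta \<inter> K': simplices of K' that are faces of Delta.\<close>
definition simp_restrict :: "'a::euclidean_space set \<Rightarrow> 'a set set \<Rightarrow> 'a set set" where
  "simp_restrict D K' = {G\<in>K'. G face_of D}"

definition adjacent :: "'a::euclidean_space set \<Rightarrow> 'a set \<Rightarrow> bool" where
  "adjacent S T \<longleftrightarrow> (\<exists>F. F \<noteq> {} \<and> F face_of S \<and> F face_of T)"

definition star :: "'a::euclidean_space set set \<Rightarrow> 'a set set \<Rightarrow> 'a set set" where
  "star K K' = {F. F \<noteq> {} \<and> (\<exists>S\<in>K. \<exists>T\<in>K'. adjacent S T \<and> F face_of S)}"

text \<open>Nice: for each Delta in the star, Delta \<inter> K' is a single face F of Delta
  (possibly the empty face) together with its (nonempty) faces.\<close>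
definition nice :: "'a::euclidean_space set set \<Rightarrow> 'a set set \<Rightarrow> bool" where
  "nice K K' \<longleftrightarrow> (\<forall>D\<in>star K K'. \<exists>F. F face_of D \<and>
       simp_restrict D K' = {G. G face_of F \<and> G \<noteq> {}})"

end

theory Submission
  imports Defs
begin

lemma hull_face_union:
  fixes D :: "'a::euclidean_space set"
  assumes "is_simplex D" and R: "\<forall>G\<in>R. G face_of D"
  shows "convex hull (\<Union>R) face_of D"
proof -
  obtain V where V: "finite V" "\<not> affine_dependent V" "D = convex hull V"
    using assms(1) unfolding is_simplex_def by blast
  define W where "W = V \<inter> \<Union>R"
  have "convex hull W \<subseteq> convex hull (\<Union>R)"
    by (rule hull_mono) (auto simp: W_def)
  moreover have "\<Union>R \<subseteq> convex hull W"
  proof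
    fix x assume "x \<in> \<Union>R"
    then obtain G where G: "G \<in> R" "x \<in> G" by blast
    then obtain c where c: "c \<subseteq> V" "G = convex hull c"
      using R V face_of_convex_hull_affine_independent by metis
    have "c \<subseteq> W" using c G by (auto simp: W_def hull_inc)
    then show "x \<in> convex hull W" using c G hull_mono by blast
  qed
  hence "convex hull (\<Union>R) \<subseteq> convex hull W"
    by (simp add: convex_hull_subset)
  ultimately have "convex hull (\<Union>R) = convex hull W" by blast
  moreover have "W \<subseteq> V" by (auto simp: W_def)
  ultimately show ?thesis
    using V face_of_convex_hull_affine_independent by metis
qed

theorem lemma3p10:
  fixes K K' :: "'a::euclidean_space set set"
  assumes "simplicial_complex K" and "subcomplex K' K"
  shows "nice K K' \<longleftrightarrow>
    (\<forall>D\<in>K. D = convex hull (\<Union>(simp_restrict D K')) \<longrightarrow> D \<in> K')"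
proof
  have Ksimp: "\<And>S. S \<in> K \<Longrightarrow> is_simplex S" and Kface: "\<And>S F. S \<in> K \<Longrightarrow> F face_of S \<Longrightarrow> F \<noteq> {} \<Longrightarrow> F \<in> K"
    using assms(1) unfolding simplicial_complex_def by blast+
  have sub: "K' \<subseteq> K" and K'face: "\<And>S F. S \<in> K' \<Longrightarrow> F face_of S \<Longrightarrow> F \<noteq> {} \<Longrightarrow> F \<in> K'"
    using assms(2) unfolding subcomplex_def simplicial_complex_def by blast+
  have ne: "\<And>S. S \<in> K \<Longrightarrow> S \<noteq> {}"
    using Ksimp unfolding is_simplex_def by (metis convex_hull_eq_empty)
  {
    assume N: "nice K K'"
    show "\<forall>D\<in>K. D = convex hull (\<Union>(simp_restrict D K')) \<longrightarrow> D \<in> K'"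
    proof (intro ballI impI)
      fix D assume D: "D \<in> K" and eq: "D = convex hull (\<Union>(simp_restrict D K'))"
      have "simp_restrict D K' \<noteq> {}"
      proof
        assume "simp_restrict D K' = {}"
        then show False using eq ne[OF D] by simp
      qed
      then obtain G where G: "G \<in> K'" "G face_of D" unfolding simp_restrict_def by blast
      have "G \<noteq> {}" using ne G sub by blast
      moreover have "G face_of G" using face_of_refl[OF face_of_imp_convex[OF G(2)]] .
      ultimately have "adjacent D G" unfolding adjacent_def using G(2) by blast
      have cD: "convex D" using Ksimp[OF D] unfolding is_simplex_def by (auto simp: convex_convex_hull)
      have "D face_of D" using face_of_refl[OF cD] .
      hence "D \<in> star K K'" unfolding star_def using D G(1) \<open>adjacent D G\<close> ne[OF D] by blast
      then obtain F where F: "F face_of D" "simp_restrict D K' = {G. G face_of F \<and> G \<noteq> {}}"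
        using N unfolding nice_def by blast
      have cF: "convex F" using F(1) face_of_imp_convex by blast
      have "F \<noteq> {}" using F \<open>simp_restrict D K' \<noteq> {}\<close> by auto
      hence "\<Union>(simp_restrict D K') = F" using F(2) face_of_refl[OF cF] face_of_imp_subset by auto
      hence "D = F" using eq cF by (simp add: convex_hull_eq)
      moreover have "F \<in> simp_restrict D K'" using F(2) face_of_refl[OF cF] \<open>F \<noteq> {}\<close> by auto
      ultimately show "D \<in> K'" unfolding simp_restrict_def by auto
    qed
  }
  {
    assume C: "\<forall>D\<in>K. D = convex hull (\<Union>(simp_restrict D K')) \<longrightarrow> D \<in> K'"
    show "nice K K'" unfolding nice_def
    proof
      fix D assume "D \<in> star K K'"
      then obtain S where S: "S \<in> K" "D face_of S" "D \<noteq> {}" unfolding star_def by blast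
      hence D: "D \<in> K" using Kface by blast
      define R where "R = simp_restrict D K'"
      show "\<exists>F. F face_of D \<and> simp_restrict D K' = {G. G face_of F \<and> G \<noteq> {}}"
      proof (cases "R = {}")
        case True
        then show ?thesis unfolding R_def by (intro exI[of _ "{}"]) auto
      next
        case False
        define F where "F = convex hull (\<Union>R)"
        have RD: "\<forall>G\<in>R. G face_of D" unfolding R_def simp_restrict_def by auto
        have FD: "F face_of D" unfolding F_def by (rule hull_face_union[OF Ksimp[OF D] RD])
        have Fne: "F \<noteq> {}" using False ne sub unfolding F_def R_def simp_restrict_def by auto
        have FK: "F \<in> K" using Kface[OF D FD Fne] .
        have RF: "\<forall>G\<in>R. G face_of F"
        proof
          fix G assume "G \<in> R"
          hence "G face_of D" "G \<subseteq> F" using RD unfolding F_def by (auto intro: hull_inc)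
          then show "G face_of F" using FD face_of_subset face_of_imp_subset by blast
        qed
        have "simp_restrict F K' = R"
        proof
          show "simp_restrict F K' \<subseteq> R" unfolding R_def simp_restrict_def
            using FD face_of_trans by (metis (no_types, lifting) Collect_mono_iff)
          show "R \<subseteq> simp_restrict F K'" using RF unfolding R_def simp_restrict_def by auto
        qed
        hence "F = convex hull (\<Union>(simp_restrict F K'))" by (simp add: F_def)
        hence FK': "F \<in> K'" using C FK by blast
        have "R = {G. G face_of F \<and> G \<noteq> {}}"
        proof
          show "R \<subseteq> {G. G face_of F \<and> G \<noteq> {}}" using RF ne sub unfolding R_def simp_restrict_def by auto
          show "{G. G face_of F \<and> G \<noteq> {}} \<subseteq> R" unfolding R_def simp_restrict_def
            using K'face[OF FK'] FD face_of_trans by auto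
        qed
        then show ?thesis using FD unfolding R_def by blast
      qed
    qed
  }
qed

end
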